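(* Let the functions satisfy the $M=2$ system and the boundary conditions (B) (see context), assume $\eta_0'(s)\neq0$ and $y_2(s)\ne0$ for $s>0$, and define $G:=x_0/y_2$. Then $$\Big(3s\frac{G'}{G}+2e_1\Big)^2-4e_1^2=12\Big(\eta_0-e_2-3s\eta_0'-s\frac{\eta_0''}{\eta_0'}\Big)-12s^2\Big(\frac{\eta_0'''}{\eta_0'}-\frac34\Big(\frac{\eta_0''}{\eta_0'}\Big)^2\Big).$$ If moreover, as $s\to0^+$, $x_0(s)\sim -\dfrac{i s^{-\nu_0}}{\Gamma(\nu_1-\nu_0+1)\Gamma(\nu_2-\nu_0+1)}$ and $y_2(s)\sim \dfrac{i\Gamma(\nu_2-\nu_1)s^{\nu_1}}{\Gamma(\nu_1-\nu_0+1)}+\dfrac{i\Gamma(\nu_1-\nu_2)s^{\nu_2}}{\Gamma(\nu_2-\nu_0+1)}$, then $$G^{-1}\sim-\Gamma(\nu_2-\nu_1)\Gamma(\nu_2-\nu_0+1)s^{\nu_1+\nu_0}-\Gamma(\nu_1-\nu_2)\Gamma(\nu_1-\nu_0+1)s^{\nu_2+\nu_0}\quad(s\to0^+).$$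
   Context: Fix complex parameters $\nu_0,\nu_1,\nu_2$ with $\nu_2-\nu_1\notin\mathbb Z$, and let $e_1=\nu_0+\nu_1+\nu_2$, $e_2=\nu_0\nu_1+\nu_0\nu_2+\nu_1\nu_2$, $e_3=\nu_0\nu_1\nu_2$. The $M=2$ system is the following system for smooth complex-valued functions $x_0,x_1,x_2,y_0,y_1,y_2,\xi_0,\xi_1,\xi_2,\eta_0,\eta_1,\eta_2$ of $s\in(0,\infty)$, with $'=d/ds$: $sx_0'=-\eta_0x_0-x_1$, $sx_1'=-\eta_1x_0-x_2$, $sx_2'=-\eta_2x_0-sx_0+\xi_0x_0+\xi_1x_1+\xi_2x_2$, $sy_2'=-\xi_2y_2+y_1$, $sy_1'=-\xi_1y_2+y_0$, $sy_0'=-\xi_0y_2+sy_2+\eta_0y_0+\eta_1y_1+\eta_2y_2$, $\xi_0'=-x_0y_0$, $\xi_1'=-x_0y_1$, $\xi_2'=-x_0y_2$, $\eta_0'=-x_0y_2$, $\eta_1'=-x_1y_2$, $\eta_2'=-x_2y_2$. Boundary conditions (B): as $s\to0^+$, $\eta_0,\eta_1,\eta_2\to0$, $\xi_0\to-e_3$, $\xi_1\to e_2$, $\xi_2\to-e_1$, and $x_j(s)y_k(s)\to0$, $s\,x_j(s)y_k(s)\to0$ for all $j,k\in\{0,1,2\}$. *)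

theory Defs
  imports "HOL-Analysis.Analysis" "HOL-Library.Landau_Symbols"
begin

definition D :: "(real \<Rightarrow> complex) \<Rightarrow> real \<Rightarrow> complex" where
  "D f = (\<lambda>s. vector_derivative f (at s))"

definition smooth_pos :: "(real \<Rightarrow> complex) \<Rightarrow> bool" where
  "smooth_pos f \<longleftrightarrow> (\<forall>n. \<forall>s>0. ((D ^^ n) f) differentiable (at s))"

end

theory Submission
  imports Defs
begin

lemma smooth_hvd: "smooth_pos f \<Longrightarrow> 0 < s \<Longrightarrow> (f has_vector_derivative D f s) (at s)"
  unfolding smooth_pos_def D_def
  by (metis funpow_0 vector_derivative_works)

lemma vd_eq: "(f has_vector_derivative d) F \<Longrightarrow> d = d' \<Longrightarrow> (f has_vector_derivative d') F"
  by simp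

lemma const_on_pos:
  fixes f :: "real \<Rightarrow> complex"
  assumes "\<And>t. 0<t \<Longrightarrow> (f has_vector_derivative 0) (at t)"
    and "(f \<longlongrightarrow> L) (at_right 0)" and "0 < t"
  shows "f t = L"
proof -
  obtain c where c: "\<And>x. x \<in> {0<..} \<Longrightarrow> f x = c"
    using has_vector_derivative_zero_constant[of "{0::real<..}" f]
    using assms(1) has_vector_derivative_at_within by (metis convex_real_interval(3) greaterThan_iff)
  have ev: "\<forall>\<^sub>F x in at_right (0::real). f x = c"
    using eventually_at_right_less[of "0::real"] by eventually_elim (simp add: c)
  have "(f \<longlongrightarrow> c) (at_right 0)"
    by (rule Lim_transform_eventually[OF tendsto_const]) (use ev in \<open>auto elim: eventually_mono\<close>)
  hence "c = L" using assms(2) tendsto_unique trivial_limit_at_right_real by blast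
  thus ?thesis using c assms(3) by simp
qed

lemma divl: "of_real t * a = b \<Longrightarrow> t \<noteq> 0 \<Longrightarrow> a = b / (of_real t :: complex)"
  by (simp add: field_simps mult.commute)

lemma alg:
  fixes S xA xB xC yA yB yC aB aC bA bB eB eC dxA dxB dyB dyC daC dbA DG dC dD :: complex
  assumes nz: "S \<noteq> 0" "xA \<noteq> 0" "yC \<noteq> 0"
  and hx0: "dxA = (-bA*xA - xB)/S"
  and hx1: "dxB = (-bB*xA - xC)/S"
  and hy2: "dyC = (-aC*yC + yB)/S"
  and hy1: "dyB = (-aB*yC + yA)/S"
  and ha2: "daC = -xA*yC"
  and hb0: "dbA = -xA*yC"
  and I1: "aC = bA - eB"
  and I2: "aB = bB - S*xA*yC - bA + bA^2 - eB*bA + eC"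
  and Q: "yA = -(xB*yB+xC*yC)/xA"
  and hDG: "DG = xA * (dyC * - (inverse yC ^ Suc (Suc 0))) + dxA * inverse yC"
  and hd2: "dC = -(xA*dyC + dxA*yC)"
  and hd3: "dD = -(dxA*(-aC*yC+yB) + xA*(-daC*yC - aC*dyC + dyB) + (-dbA*xA - bA*dxA - dxB)*yC + (-bA*xA-xB)*dyC) * inverse S
     + (-(xA*(-aC*yC+yB) + (-bA*xA-xB)*yC)) * (-(inverse S ^ 2))"
  shows "(3*S*DG/(xA/yC) + 2*eB)^2 - 4*eB^2 = 12*(bA - eC - 3*S*dbA - S*dC/dbA) - 12*S^2*(dD/dbA - 3/4*(dC/dbA)^2)"
  unfolding hd3 hd2 hDG hx0 hx1 hy2 hy1 ha2 hb0 Q I2 I1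
  using nz by (simp add: field_simps power2_eq_square)

theorem mainTheorem10:
  fixes \<nu>0 \<nu>1 \<nu>2 e1 e2 e3 :: complex
    and x0 x1 x2 y0 y1 y2 \<xi>0 \<xi>1 \<xi>2 \<eta>0 \<eta>1 \<eta>2 G :: "real \<Rightarrow> complex"
  assumes nonint: "\<nu>2 - \<nu>1 \<notin> \<int>"
    and e1_def: "e1 = \<nu>0 + \<nu>1 + \<nu>2"
    and e2_def: "e2 = \<nu>0 * \<nu>1 + \<nu>0 * \<nu>2 + \<nu>1 * \<nu>2"
    and e3_def: "e3 = \<nu>0 * \<nu>1 * \<nu>2"
    and smooth: "smooth_pos x0" "smooth_pos x1" "smooth_pos x2"
                "smooth_pos y0" "smooth_pos y1" "smooth_pos y2"
                "smooth_pos \<xi>0" "smooth_pos \<xi>1" "smooth_pos \<xi>2"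
                "smooth_pos \<eta>0" "smooth_pos \<eta>1" "smooth_pos \<eta>2"
    and sys: "\<And>s. s > 0 \<Longrightarrow>
        of_real s * D x0 s = - \<eta>0 s * x0 s - x1 s \<and>
        of_real s * D x1 s = - \<eta>1 s * x0 s - x2 s \<and>
        of_real s * D x2 s = - \<eta>2 s * x0 s - of_real s * x0 s
                              + \<xi>0 s * x0 s + \<xi>1 s * x1 s + \<xi>2 s * x2 s \<and>
        of_real s * D y2 s = - \<xi>2 s * y2 s + y1 s \<and>
        of_real s * D y1 s = - \<xi>1 s * y2 s + y0 s \<and>
        of_real s * D y0 s = - \<xi>0 s * y2 s + of_real s * y2 s
                              + \<eta>0 s * y0 s + \<eta>1 s * y1 s + \<eta>2 s * y2 s \<and>
        D \<xi>0 s = - x0 s * y0 s \<and>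
        D \<xi>1 s = - x0 s * y1 s \<and>
        D \<xi>2 s = - x0 s * y2 s \<and>
        D \<eta>0 s = - x0 s * y2 s \<and>
        D \<eta>1 s = - x1 s * y2 s \<and>
        D \<eta>2 s = - x2 s * y2 s"
    and B_eta: "(\<eta>0 \<longlongrightarrow> 0) (at_right 0)" "(\<eta>1 \<longlongrightarrow> 0) (at_right 0)"
               "(\<eta>2 \<longlongrightarrow> 0) (at_right 0)"
    and B_xi: "(\<xi>0 \<longlongrightarrow> - e3) (at_right 0)" "(\<xi>1 \<longlongrightarrow> e2) (at_right 0)"
              "(\<xi>2 \<longlongrightarrow> - e1) (at_right 0)"
    and B_xy: "\<And>j k. j \<in> {0,1,2::nat} \<Longrightarrow> k \<in> {0,1,2::nat} \<Longrightarrow>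
        ((\<lambda>s. ([x0, x1, x2] ! j) s * ([y0, y1, y2] ! k) s) \<longlongrightarrow> 0) (at_right 0) \<and>
        ((\<lambda>s. of_real s * ([x0, x1, x2] ! j) s * ([y0, y1, y2] ! k) s) \<longlongrightarrow> 0) (at_right 0)"
    and eta0'_nz: "\<And>s. s > 0 \<Longrightarrow> D \<eta>0 s \<noteq> 0"
    and y2_nz: "\<And>s. s > 0 \<Longrightarrow> y2 s \<noteq> 0"
    and G_def: "G = (\<lambda>s. x0 s / y2 s)"
  shows "(\<forall>s>0.
      (3 * of_real s * D G s / G s + 2 * e1)\<^sup>2 - 4 * e1\<^sup>2
      = 12 * (\<eta>0 s - e2 - 3 * of_real s * D \<eta>0 s
              - of_real s * (D ^^ 2) \<eta>0 s / D \<eta>0 s)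
        - 12 * (of_real s)\<^sup>2 * ((D ^^ 3) \<eta>0 s / D \<eta>0 s
              - 3 / 4 * ((D ^^ 2) \<eta>0 s / D \<eta>0 s)\<^sup>2))
    \<and>
    ((x0 \<sim>[at_right 0] (\<lambda>s. - \<i> * of_real s powr (- \<nu>0)
                           / (Gamma (\<nu>1 - \<nu>0 + 1) * Gamma (\<nu>2 - \<nu>0 + 1))))
     \<and> (y2 \<sim>[at_right 0] (\<lambda>s. \<i> * Gamma (\<nu>2 - \<nu>1) * of_real s powr \<nu>1 / Gamma (\<nu>1 - \<nu>0 + 1)
                           + \<i> * Gamma (\<nu>1 - \<nu>2) * of_real s powr \<nu>2 / Gamma (\<nu>2 - \<nu>0 + 1)))
     \<longrightarrow> ((\<lambda>s. inverse (G s)) \<sim>[at_right 0]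
            (\<lambda>s. - Gamma (\<nu>2 - \<nu>1) * Gamma (\<nu>2 - \<nu>0 + 1) * of_real s powr (\<nu>1 + \<nu>0)
                 - Gamma (\<nu>1 - \<nu>2) * Gamma (\<nu>1 - \<nu>0 + 1) * of_real s powr (\<nu>2 + \<nu>0))))"
proof -
  note hx0 = smooth_hvd[OF smooth(1)] and hx1 = smooth_hvd[OF smooth(2)] and hx2 = smooth_hvd[OF smooth(3)]
    and hy0 = smooth_hvd[OF smooth(4)] and hy1 = smooth_hvd[OF smooth(5)] and hy2 = smooth_hvd[OF smooth(6)]
    and ha0 = smooth_hvd[OF smooth(7)] and ha1 = smooth_hvd[OF smooth(8)] and ha2 = smooth_hvd[OF smooth(9)]
    and hb0 = smooth_hvd[OF smooth(10)] and hb1 = smooth_hvd[OF smooth(11)] and hb2 = smooth_hvd[OF smooth(12)]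
  have sD: "D x0 t = (- \<eta>0 t * x0 t - x1 t) / of_real t \<and>
        D x1 t = (- \<eta>1 t * x0 t - x2 t) / of_real t \<and>
        D x2 t = (- \<eta>2 t * x0 t - of_real t * x0 t
                              + \<xi>0 t * x0 t + \<xi>1 t * x1 t + \<xi>2 t * x2 t) / of_real t \<and>
        D y2 t = (- \<xi>2 t * y2 t + y1 t) / of_real t \<and>
        D y1 t = (- \<xi>1 t * y2 t + y0 t) / of_real t \<and>
        D y0 t = (- \<xi>0 t * y2 t + of_real t * y2 t
                              + \<eta>0 t * y0 t + \<eta>1 t * y1 t + \<eta>2 t * y2 t) / of_real t \<and>
        D \<xi>0 t = - x0 t * y0 t \<and>
        D \<xi>1 t = - x0 t * y1 t \<and>
        D \<xi>2 t = - x0 t * y2 t \<and>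
        D \<eta>0 t = - x0 t * y2 t \<and>
        D \<eta>1 t = - x1 t * y2 t \<and>
        D \<eta>2 t = - x2 t * y2 t" if t: "0 < t" for t
  proof -
    have tn: "t \<noteq> 0" using t by simp
    from sys[OF t] show ?thesis
      by (intro conjI divl[OF _ tn]) auto
  qed
  have I1: "\<xi>2 t = \<eta>0 t - e1" if t: "0 < t" for t
  proof -
    have "(\<lambda>t. \<xi>2 t - \<eta>0 t) t = - e1"
    proof (rule const_on_pos[OF _ _ t])
      fix t :: real assume t: "0 < t"
      show "((\<lambda>t. \<xi>2 t - \<eta>0 t) has_vector_derivative 0) (at t)"
        apply (rule vd_eq)
         apply (rule derivative_intros ha2[OF t] hb0[OF t])+
        using sD[OF t] by simp
    next
      show "((\<lambda>t. \<xi>2 t - \<eta>0 t) \<longlongrightarrow> - e1) (at_right 0)"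
        using tendsto_diff[OF B_xi(3) B_eta(1)] by simp
    qed
    thus ?thesis by (simp add: algebra_simps)
  qed
  have I2: "\<xi>1 t = \<eta>1 t - of_real t * x0 t * y2 t - \<eta>0 t + \<eta>0 t ^ 2 - e1 * \<eta>0 t + e2" if t: "0 < t" for t
  proof -
    have "(\<lambda>t. \<xi>1 t - \<eta>1 t + of_real t * x0 t * y2 t + \<eta>0 t - \<eta>0 t * \<eta>0 t + e1 * \<eta>0 t) t = e2"
    proof (rule const_on_pos[OF _ _ t])
      fix t :: real assume t: "0 < t"
      show "((\<lambda>t. \<xi>1 t - \<eta>1 t + of_real t * x0 t * y2 t + \<eta>0 t - \<eta>0 t * \<eta>0 t + e1 * \<eta>0 t) has_vector_derivative 0) (at t)"
        apply (rule vd_eq)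
         apply (rule derivative_intros ha1[OF t] hb1[OF t] hb0[OF t] hx0[OF t] hy2[OF t] DERIV_ident)+
        apply (simp only: sD[OF t] I1[OF t])
        using t by (simp add: field_simps)
    next
      have "((\<lambda>t. \<xi>1 t - \<eta>1 t + of_real t * x0 t * y2 t + \<eta>0 t - \<eta>0 t * \<eta>0 t + e1 * \<eta>0 t) \<longlongrightarrow> e2 - 0 + 0 + 0 - 0 * 0 + e1 * 0) (at_right 0)"
        using B_xy[of 0 2] by (intro tendsto_intros B_xi B_eta) auto
      thus "((\<lambda>t. \<xi>1 t - \<eta>1 t + of_real t * x0 t * y2 t + \<eta>0 t - \<eta>0 t * \<eta>0 t + e1 * \<eta>0 t) \<longlongrightarrow> e2) (at_right 0)"
        by simp
    qed
    thus ?thesis by (simp add: algebra_simps power2_eq_square)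
  qed
  have IQ: "x0 t * y0 t + x1 t * y1 t + x2 t * y2 t = 0" if t: "0 < t" for t
  proof -
    have "(\<lambda>t. x0 t * y0 t + x1 t * y1 t + x2 t * y2 t) t = 0"
    proof (rule const_on_pos[OF _ _ t])
      fix t :: real assume t: "0 < t"
      show "((\<lambda>t. x0 t * y0 t + x1 t * y1 t + x2 t * y2 t) has_vector_derivative 0) (at t)"
        apply (rule vd_eq)
         apply (rule derivative_intros hx0[OF t] hx1[OF t] hx2[OF t] hy0[OF t] hy1[OF t] hy2[OF t])+
        apply (simp only: sD[OF t])
        using t by (simp add: field_simps)
    next
      have "((\<lambda>t. x0 t * y0 t + x1 t * y1 t + x2 t * y2 t) \<longlongrightarrow> 0 + 0 + 0) (at_right 0)"
        using B_xy[of 0 0] B_xy[of 1 1] B_xy[of 2 2] by (intro tendsto_intros) auto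
      thus "((\<lambda>t. x0 t * y0 t + x1 t * y1 t + x2 t * y2 t) \<longlongrightarrow> 0) (at_right 0)"
        by simp
    qed
    thus ?thesis by simp
  qed
  have d2all: "D (D \<eta>0) t = -(x0 t * D y2 t + D x0 t * y2 t)" if t: "0 < t" for t
  proof -
    have "((\<lambda>t. -(x0 t * y2 t)) has_vector_derivative -(x0 t * D y2 t + D x0 t * y2 t)) (at t)"
      apply (rule vd_eq)
       apply (rule derivative_intros hx0[OF t] hy2[OF t])+
      by simp
    hence "(D \<eta>0 has_vector_derivative -(x0 t * D y2 t + D x0 t * y2 t)) (at t)"
      by (rule has_vector_derivative_transform_within_open[where S="{0<..}"]) (use t sD in auto)
    thus ?thesis by (simp add: D_def[of "D \<eta>0"] vector_derivative_at)
  qed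
  have part1: "(3 * of_real s * D G s / G s + 2 * e1)\<^sup>2 - 4 * e1\<^sup>2
      = 12 * (\<eta>0 s - e2 - 3 * of_real s * D \<eta>0 s
              - of_real s * (D ^^ 2) \<eta>0 s / D \<eta>0 s)
        - 12 * (of_real s)\<^sup>2 * ((D ^^ 3) \<eta>0 s / D \<eta>0 s
              - 3 / 4 * ((D ^^ 2) \<eta>0 s / D \<eta>0 s)\<^sup>2)" if s: "0 < s" for s
  proof -
    define N where "N = (\<lambda>t. -(x0 t*(-\<xi>2 t*y2 t+y1 t) + (-\<eta>0 t*x0 t-x1 t)*y2 t))"
    define N' where "N' = -(D x0 s*(-\<xi>2 s*y2 s+y1 s) + x0 s*(-D \<xi>2 s*y2 s - \<xi>2 s*D y2 s + D y1 s)
        + (-D \<eta>0 s*x0 s - \<eta>0 s*D x0 s - D x1 s)*y2 s + (-\<eta>0 s*x0 s-x1 s)*D y2 s)"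
    have "((\<lambda>t. N t * of_real (inverse t)) has_vector_derivative
        N' * inverse (of_real s) + N s * (-(inverse (of_real s) ^ 2))) (at s)"
      unfolding N_def N'_def
      apply (rule vd_eq)
       apply (rule derivative_intros hx0[OF s] hx1[OF s] hy1[OF s] hy2[OF s] ha2[OF s] hb0[OF s]
           DERIV_inverse)+
      using s by (simp_all add: field_simps power2_eq_square)
    hence "(D (D \<eta>0) has_vector_derivative
        N' * inverse (of_real s) + N s * (-(inverse (of_real s) ^ 2))) (at s)"
    proof (rule has_vector_derivative_transform_within_open[where S="{0<..}"])
      fix t :: real assume "t \<in> {0<..}"
      hence t: "0 < t" by simp
      show "N t * of_real (inverse t) = D (D \<eta>0) t"
        unfolding d2all[OF t] N_def using t by (simp only: sD[OF t]) (simp add: field_simps)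
    qed (use s in auto)
    hence d3: "(D ^^ 3) \<eta>0 s = N' * inverse (of_real s) + N s * (-(inverse (of_real s) ^ 2))"
      by (simp add: numeral_3_eq_3 D_def[of "D (D \<eta>0)"] vector_derivative_at)
    have d2: "(D ^^ 2) \<eta>0 s = -(x0 s * D y2 s + D x0 s * y2 s)"
      using d2all[OF s] by (simp add: numeral_2_eq_2)
    have "((\<lambda>t. x0 t * (inverse \<circ> y2) t) has_vector_derivative
          x0 s * (D y2 s * - (inverse (y2 s) ^ Suc (Suc 0))) + D x0 s * (inverse \<circ> y2) s) (at s)"
      by (rule has_vector_derivative_mult[OF hx0[OF s] field_vector_diff_chain_at[OF hy2[OF s] DERIV_inverse]])
        (rule y2_nz[OF s])
    moreover have "G = (\<lambda>t. x0 t * (inverse \<circ> y2) t)"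
      by (simp add: G_def fun_eq_iff divide_inverse)
    ultimately have DG: "D G s = x0 s * (D y2 s * - (inverse (y2 s) ^ Suc (Suc 0))) + D x0 s * inverse (y2 s)"
      by (simp add: D_def vector_derivative_at)
    have x0nz: "x0 s \<noteq> 0" using eta0'_nz[OF s] sD[OF s] by auto
    have Gs: "G s = x0 s / y2 s" by (simp add: G_def)
    show ?thesis unfolding Gs
    proof (rule alg[where dxA = "D x0 s" and dxB = "D x1 s" and dyB = "D y1 s" and dyC = "D y2 s"
          and daC = "D \<xi>2 s" and aB = "\<xi>1 s" and aC = "\<xi>2 s" and bB = "\<eta>1 s" and yA = "y0 s" and xC = "x2 s"])
      show "complex_of_real s \<noteq> 0" using s by simp
      show "x0 s \<noteq> 0" by (rule x0nz)
      show "y2 s \<noteq> 0" by (rule y2_nz[OF s])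
      show "\<xi>2 s = \<eta>0 s - e1" by (rule I1[OF s])
      show "\<xi>1 s = \<eta>1 s - complex_of_real s * x0 s * y2 s - \<eta>0 s + (\<eta>0 s)\<^sup>2 - e1 * \<eta>0 s + e2"
        by (rule I2[OF s])
      show "y0 s = - (x1 s * y1 s + x2 s * y2 s) / x0 s"
        using IQ[OF s] x0nz by (simp add: field_simps add_eq_0_iff)
      show "D G s = x0 s * (D y2 s * - (inverse (y2 s) ^ Suc (Suc 0))) + D x0 s * inverse (y2 s)"
        by (rule DG)
      show "(D ^^ 2) \<eta>0 s = - (x0 s * D y2 s + D x0 s * y2 s)" by (rule d2)
      show "(D ^^ 3) \<eta>0 s = - (D x0 s * (- \<xi>2 s * y2 s + y1 s) + x0 s * (- D \<xi>2 s * y2 s - \<xi>2 s * D y2 s + D y1 s) +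
        (- D \<eta>0 s * x0 s - \<eta>0 s * D x0 s - D x1 s) * y2 s + (- \<eta>0 s * x0 s - x1 s) * D y2 s) * inverse (complex_of_real s) +
        - (x0 s * (- \<xi>2 s * y2 s + y1 s) + (- \<eta>0 s * x0 s - x1 s) * y2 s) * - (inverse (complex_of_real s))\<^sup>2"
        using d3 by (simp add: N_def N'_def)
    qed (use sD[OF s] in simp_all)
  qed
  have x0nz: "x0 t \<noteq> 0" if t: "0 < t" for t using eta0'_nz[OF t] sD[OF t] by auto
  have part2: "(\<lambda>s. inverse (G s)) \<sim>[at_right 0]
            (\<lambda>s. - Gamma (\<nu>2 - \<nu>1) * Gamma (\<nu>2 - \<nu>0 + 1) * of_real s powr (\<nu>1 + \<nu>0)
                 - Gamma (\<nu>1 - \<nu>2) * Gamma (\<nu>1 - \<nu>0 + 1) * of_real s powr (\<nu>2 + \<nu>0))"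
    if ax: "x0 \<sim>[at_right 0] (\<lambda>s. - \<i> * of_real s powr (- \<nu>0)
                           / (Gamma (\<nu>1 - \<nu>0 + 1) * Gamma (\<nu>2 - \<nu>0 + 1)))"
     and ay: "y2 \<sim>[at_right 0] (\<lambda>s. \<i> * Gamma (\<nu>2 - \<nu>1) * of_real s powr \<nu>1 / Gamma (\<nu>1 - \<nu>0 + 1)
                           + \<i> * Gamma (\<nu>1 - \<nu>2) * of_real s powr \<nu>2 / Gamma (\<nu>2 - \<nu>0 + 1))"
  proof -
    have gnz: "Gamma (\<nu>1 - \<nu>0 + 1) * Gamma (\<nu>2 - \<nu>0 + 1) \<noteq> 0"
    proof
      assume z: "Gamma (\<nu>1 - \<nu>0 + 1) * Gamma (\<nu>2 - \<nu>0 + 1) = 0"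
      have "\<forall>\<^sub>F s in at_right (0::real). x0 s = 0 \<longleftrightarrow> (- \<i> * of_real s powr (- \<nu>0)
                           / (Gamma (\<nu>1 - \<nu>0 + 1) * Gamma (\<nu>2 - \<nu>0 + 1))) = 0"
        by (rule asymp_equiv_eventually_zeros[OF ax])
      hence "\<forall>\<^sub>F s in at_right (0::real). False"
        using eventually_at_right_less[of "0::real"]
        by eventually_elim (use z x0nz in auto)
      thus False by (simp add: trivial_limit_at_right_real)
    qed
    hence g1: "Gamma (\<nu>1 - \<nu>0 + 1) \<noteq> 0" and g2: "Gamma (\<nu>2 - \<nu>0 + 1) \<noteq> 0" by auto
    have "(\<lambda>s. y2 s / x0 s) \<sim>[at_right 0] (\<lambda>s. (\<i> * Gamma (\<nu>2 - \<nu>1) * of_real s powr \<nu>1 / Gamma (\<nu>1 - \<nu>0 + 1)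
                           + \<i> * Gamma (\<nu>1 - \<nu>2) * of_real s powr \<nu>2 / Gamma (\<nu>2 - \<nu>0 + 1)) /
                  (- \<i> * of_real s powr (- \<nu>0)
                           / (Gamma (\<nu>1 - \<nu>0 + 1) * Gamma (\<nu>2 - \<nu>0 + 1))))"
      by (rule asymp_equiv_divide[OF ay ax])
    thus ?thesis
    proof (rule asymp_equiv_transfer)
      show "\<forall>\<^sub>F x in at_right 0. y2 x / x0 x = inverse (G x)"
        by (simp add: G_def)
      show "\<forall>\<^sub>F x in at_right 0. (\<i> * Gamma (\<nu>2 - \<nu>1) * of_real x powr \<nu>1 / Gamma (\<nu>1 - \<nu>0 + 1)
                           + \<i> * Gamma (\<nu>1 - \<nu>2) * of_real x powr \<nu>2 / Gamma (\<nu>2 - \<nu>0 + 1)) /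
                  (- \<i> * of_real x powr (- \<nu>0)
                           / (Gamma (\<nu>1 - \<nu>0 + 1) * Gamma (\<nu>2 - \<nu>0 + 1))) =
            - Gamma (\<nu>2 - \<nu>1) * Gamma (\<nu>2 - \<nu>0 + 1) * of_real x powr (\<nu>1 + \<nu>0)
                 - Gamma (\<nu>1 - \<nu>2) * Gamma (\<nu>1 - \<nu>0 + 1) * of_real x powr (\<nu>2 + \<nu>0)"
        using eventually_at_right_less[of "0::real"]
      proof eventually_elim
        case (elim x)
        have q: "complex_of_real x powr \<nu>0 \<noteq> 0" using elim by simp
        show ?case using q g1 g2
          by (simp add: powr_minus powr_add field_simps)
      qed
    qed
  qed
  show ?thesis using part1 part2 by blast
qed

end
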